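(* Let $n\geq 3$ and let $W\subseteq\operatorname{Sym}^3\mathbb{K}^n$ be a two-dimensional linear space (pencil) of cubic forms such that for every $f\in W$ there exist linear forms $x,y$ with $f\in\operatorname{Sym}^3\langle x,y\rangle$. Then either there is a single two-dimensional space of linear forms $\langle x,y\rangle$ with $W\subseteq \operatorname{Sym}^3\langle x,y\rangle$ (all cubics in $W$ depend on the same set of $2$ variables), or $W=\langle x^2y,\,x^2z\rangle$ for some linearly independent linear forms $x,y,z$.
   Context: $\mathbb{K}$ is an algebraically closed field of characteristic zero; $\operatorname{Sym}^3\mathbb{K}^n$ is identified with the space of cubic forms in $n$ variables. *)

theory Defs
  imports "HOL-Analysis.Finite_Cartesian_Product" "HOL-Computational_Algebra.Polynomial"
begin

text \<open>Cubic forms in n variables are represented by their symmetric coefficient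
tensors (Sym^3 K^n, char 0); linear forms by coefficient vectors in K^n.\<close>

type_synonym ('a, 'n) cubic = "'n \<Rightarrow> 'n \<Rightarrow> 'n \<Rightarrow> 'a"

definition algebraically_closed :: "'a::field itself \<Rightarrow> bool" where
  "algebraically_closed _ \<longleftrightarrow> (\<forall>p::'a poly. 0 < degree p \<longrightarrow> (\<exists>z. poly p z = 0))"

definition is_cubic_form :: "('a, 'n) cubic \<Rightarrow> bool" where
  "is_cubic_form f \<longleftrightarrow> (\<forall>i j k. f i j k = f j i k \<and> f i j k = f i k j)"

text \<open>Symmetric product of three linear forms (the monomial x y z, up to the factor 6).\<close>
definition sym_mono :: "'a::comm_ring_1^'n \<Rightarrow> 'a^'n \<Rightarrow> 'a^'n \<Rightarrow> ('a, 'n) cubic" where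
  "sym_mono x y z = (\<lambda>i j k.
     x$i*y$j*z$k + x$i*y$k*z$j + x$j*y$i*z$k + x$j*y$k*z$i + x$k*y$i*z$j + x$k*y$j*z$i)"

definition Sym3_2 :: "'a::comm_ring_1^'n \<Rightarrow> 'a^'n \<Rightarrow> ('a, 'n) cubic set" where
  "Sym3_2 x y = {f. \<exists>a b c d. f = (\<lambda>i j k.
      a * sym_mono x x x i j k + b * sym_mono x x y i j k
    + c * sym_mono x y y i j k + d * sym_mono y y y i j k)}"

definition lin_indep2 :: "'a::field^'n \<Rightarrow> 'a^'n \<Rightarrow> bool" where
  "lin_indep2 x y \<longleftrightarrow> (\<forall>a b. (\<forall>i. a * x$i + b * y$i = 0) \<longrightarrow> a = 0 \<and> b = 0)"

definition lin_indep3 :: "'a::field^'n \<Rightarrow> 'a^'n \<Rightarrow> 'a^'n \<Rightarrow> bool" where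
  "lin_indep3 x y z \<longleftrightarrow>
     (\<forall>a b c. (\<forall>i. a * x$i + b * y$i + c * z$i = 0) \<longrightarrow> a = 0 \<and> b = 0 \<and> c = 0)"

definition pencil :: "('a::field, 'n) cubic set \<Rightarrow> bool" where
  "pencil W \<longleftrightarrow> (\<exists>f g. is_cubic_form f \<and> is_cubic_form g \<and>
     (\<forall>a b. (\<forall>i j k. a * f i j k + b * g i j k = 0) \<longrightarrow> a = 0 \<and> b = 0) \<and>
     W = {(\<lambda>i j k. a * f i j k + b * g i j k) | a b. True})"

end

theory Submission
  imports Defs "HOL-Analysis.Cartesian_Space"
begin

definition dotp :: "'a::comm_ring_1^'n \<Rightarrow> 'a^'n \<Rightarrow> 'a" where
  "dotp u v = (\<Sum>i\<in>UNIV. u$i * v$i)"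

lemma dotp_add_left: "dotp (u + w) v = dotp u v + dotp w v"
  by (simp add: dotp_def distrib_right sum.distrib)
lemma dotp_scale_left: "dotp (c *s u) v = c * dotp u v"
  by (simp add: dotp_def sum_distrib_left mult.assoc)
lemma dotp_add_right: "dotp u (v + w) = dotp u v + dotp u w"
  by (simp add: dotp_def distrib_left sum.distrib)
lemma dotp_scale_right: "dotp u (c *s v) = c * dotp u v"
  by (simp add: dotp_def sum_distrib_left algebra_simps)
lemma dotp_zero_right[simp]: "dotp u 0 = 0"
  by (simp add: dotp_def)
lemma dotp_sum_right: "dotp u (\<Sum>a\<in>A. g a) = (\<Sum>a\<in>A. dotp u (g a))"
  by (induction A rule: infinite_finite_induct) (auto simp: dotp_add_right)

lemma orth_span:
  fixes l :: "'a::field^'n"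
  assumes "v \<in> vec.span S" "\<forall>s\<in>S. dotp l s = 0"
  shows "dotp l v = 0"
  using assms(1)
proof (induction rule: vec.span_induct_alt)
  case base then show ?case by simp
next
  case (step c x y) then show ?case using assms(2) by (simp add: dotp_add_right dotp_scale_right)
qed


lemma dual_exists:
  fixes B :: "('a::field^'n) set"
  assumes "vec.independent B"
  shows "\<exists>l. \<forall>a\<in>B. \<forall>b\<in>B. dotp (l a) b = (if a = b then 1 else 0)"
proof -
  obtain C where C: "B \<subseteq> C" "vec.independent C" "UNIV \<subseteq> vec.span C"
    using vec.maximal_independent_subset_extend[of B UNIV] assms by auto
  define l where "l a = (\<chi> i. vec.representation C (axis i 1) a)" for a
  have rep: "dotp (l a) v = vec.representation C v a" for a v
  proof -
    have "dotp (l a) v = (\<Sum>i\<in>UNIV. v$i * vec.representation C (axis i 1) a)"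
      by (simp add: dotp_def l_def mult.commute)
    also have "\<dots> = vec.representation C (\<Sum>i\<in>UNIV. (v$i) *s axis i 1) a"
    proof -
      have sp: "\<And>w. w \<in> vec.span C" using C by auto
      show ?thesis
        using C by (simp add: vec.representation_sum[OF C(2)] vec.representation_scale[OF C(2)] sp vec.span_scale)
    qed
    also have "\<dots> = vec.representation C v a" by (simp add: basis_expansion)
    finally show ?thesis .
  qed
  show ?thesis
    by (intro exI[of _ l]) (use C in \<open>auto simp: rep vec.representation_basis\<close>)
qed

definition col :: "('a, 'n) cubic \<Rightarrow> 'n \<Rightarrow> 'n \<Rightarrow> 'a^'n" where
  "col h j k = (\<chi> i. h i j k)"
definition cols :: "('a, 'n) cubic \<Rightarrow> ('a^'n) set" where
  "cols h = {col h j k | j k. True}"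
definition Dc :: "('a::comm_ring_1, 'n::finite) cubic \<Rightarrow> 'a^'n \<Rightarrow> 'a^'n \<Rightarrow> 'a^'n" where
  "Dc h v w = (\<chi> i. \<Sum>j\<in>UNIV. \<Sum>k\<in>UNIV. v$j * w$k * h i j k)"
definition tri :: "('a::comm_ring_1, 'n::finite) cubic \<Rightarrow> 'a^'n \<Rightarrow> 'a^'n \<Rightarrow> 'a^'n \<Rightarrow> 'a" where
  "tri h u v w = dotp u (Dc h v w)"

definition duals :: "('a::comm_ring_1^'n) set \<Rightarrow> ('a^'n \<Rightarrow> 'a^'n) \<Rightarrow> bool" where
  "duals B l \<longleftrightarrow> (\<forall>a\<in>B. \<forall>b\<in>B. dotp (l a) b = (if a = b then 1 else 0))"

lemma col_in_cols[simp]: "col h j k \<in> cols h"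
  by (auto simp: cols_def)

lemma Dc_eq: "Dc h v w = (\<Sum>j\<in>UNIV. \<Sum>k\<in>UNIV. (v$j * w$k) *s col h j k)"
  by (simp add: vec_eq_iff Dc_def col_def sum_component)

lemma Dc_in_span: "Dc (h::('a::field,'n::finite) cubic) v w \<in> vec.span (cols h)"
  unfolding Dc_eq
  by (intro vec.span_sum vec.span_scale vec.span_base col_in_cols)

lemma expand_span:
  fixes B :: "('a::field^'n) set"
  assumes "v \<in> vec.span B" "finite B" "duals B l"
  shows "v = (\<Sum>a\<in>B. dotp (l a) v *s a)"
proof -
  obtain u where u: "v = (\<Sum>b\<in>B. u b *s b)"
    using assms(1,2) vec.span_finite by blast
  have "dotp (l a) v = u a" if "a \<in> B" for a
  proof -
    have "dotp (l a) v = (\<Sum>b\<in>B. u b * dotp (l a) b)"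
      by (simp add: u dotp_sum_right dotp_scale_right)
    also have "\<dots> = (\<Sum>b\<in>B. if b = a then u b else 0)"
      using assms(3) that by (intro sum.cong) (auto simp: duals_def)
    also have "\<dots> = u a" using that assms(2) by simp
    finally show ?thesis .
  qed
  then show ?thesis by (simp add: u)
qed

lemma slot2:
  fixes h :: "('a::field,'n::finite) cubic"
  assumes sym: "is_cubic_form h" and fin: "finite B" and d: "duals B l"
    and sp: "cols h \<subseteq> vec.span B"
  shows "h i j k = (\<Sum>b\<in>B. b$j * (\<Sum>j'\<in>UNIV. l b $ j' * h i j' k))"
proof -
  have "col h i k = (\<Sum>b\<in>B. dotp (l b) (col h i k) *s b)"
    using expand_span[OF subsetD[OF sp col_in_cols] fin d] .
  then have "col h i k $ j = (\<Sum>b\<in>B. dotp (l b) (col h i k) *s b) $ j"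
    by (rule arg_cong[where f="\<lambda>v. v $ j"])
  also have "\<dots> = (\<Sum>b\<in>B. dotp (l b) (col h i k) * b$j)"
    by (simp only: sum_component vector_smult_component)
  finally have "col h i k $ j = (\<Sum>b\<in>B. dotp (l b) (col h i k) * b$j)" .
  moreover have "col h i k $ j = h i j k" using sym by (simp add: col_def is_cubic_form_def)
  moreover have "dotp (l b) (col h i k) = (\<Sum>j'\<in>UNIV. l b $ j' * h i j' k)" for b
    using sym by (simp add: col_def dotp_def is_cubic_form_def)
  ultimately show ?thesis by (simp add: mult.commute)
qed

lemma slot3:
  fixes h :: "('a::field,'n::finite) cubic"
  assumes sym: "is_cubic_form h" and fin: "finite B" and d: "duals B l"
    and sp: "cols h \<subseteq> vec.span B"
  shows "h i j k = (\<Sum>c\<in>B. c$k * (\<Sum>k'\<in>UNIV. l c $ k' * h i j k'))"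
proof -
  have "col h i j = (\<Sum>b\<in>B. dotp (l b) (col h i j) *s b)"
    using expand_span[OF subsetD[OF sp col_in_cols] fin d] .
  then have "col h i j $ k = (\<Sum>b\<in>B. dotp (l b) (col h i j) *s b) $ k"
    by (rule arg_cong[where f="\<lambda>v. v $ k"])
  also have "\<dots> = (\<Sum>b\<in>B. dotp (l b) (col h i j) * b$k)"
    by (simp only: sum_component vector_smult_component)
  finally have "col h i j $ k = (\<Sum>b\<in>B. dotp (l b) (col h i j) * b$k)" .
  moreover have "col h i j $ k = h i j k" using sym by (simp add: col_def is_cubic_form_def)
  moreover have "dotp (l b) (col h i j) = (\<Sum>k'\<in>UNIV. l b $ k' * h i j k')" for b
    using sym by (simp add: col_def dotp_def is_cubic_form_def)
  ultimately show ?thesis by (simp add: mult.commute)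
qed

lemma swap_aux: "(\<Sum>j\<in>A. (\<alpha> j::'a::comm_ring_1) * (\<Sum>c\<in>C. \<beta> c * Y c j)) = (\<Sum>c\<in>C. \<beta> c * (\<Sum>j\<in>A. \<alpha> j * Y c j))"
  apply (simp only: sum_distrib_left)
  apply (subst sum.swap)
  apply (simp only: mult.left_commute)
  done

lemma col_expand:
  fixes h :: "('a::field,'n::finite) cubic"
  assumes sym: "is_cubic_form h" and fin: "finite B" and d: "duals B l"
    and sp: "cols h \<subseteq> vec.span B"
  shows "col h j k = (\<Sum>b\<in>B. \<Sum>c\<in>B. (b$j * c$k) *s Dc h (l b) (l c))"
proof -
  have hx: "h i j k = (\<Sum>b\<in>B. \<Sum>c\<in>B. b$j * c$k * (\<Sum>j'\<in>UNIV. \<Sum>k'\<in>UNIV. l b $ j' * l c $ k' * h i j' k'))" for i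
  proof -
    have "h i j k = (\<Sum>b\<in>B. b$j * (\<Sum>j'\<in>UNIV. l b $ j' * (\<Sum>c\<in>B. c$k * (\<Sum>k'\<in>UNIV. l c $ k' * h i j' k'))))"
      apply (subst slot2[OF assms])
      apply (subst slot3[OF assms])
      by (rule refl)
    also have "\<dots> = (\<Sum>b\<in>B. \<Sum>c\<in>B. b$j * c$k * (\<Sum>j'\<in>UNIV. \<Sum>k'\<in>UNIV. l b $ j' * l c $ k' * h i j' k'))"
      apply (subst swap_aux)
      by (simp only: sum_distrib_left mult.assoc)
    finally show ?thesis .
  qed
  show ?thesis
  proof (subst vec_eq_iff, intro allI)
    fix i
    have "col h j k $ i = h i j k" by (simp add: col_def)
    also note hx[of i]
    also have "(\<Sum>b\<in>B. \<Sum>c\<in>B. b$j * c$k * (\<Sum>j'\<in>UNIV. \<Sum>k'\<in>UNIV. l b $ j' * l c $ k' * h i j' k'))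
       = (\<Sum>b\<in>B. \<Sum>c\<in>B. (b$j * c$k) *s Dc h (l b) (l c)) $ i"
      by (simp only: sum_component vector_smult_component Dc_def vec_lambda_beta)
    finally show "col h j k $ i = (\<Sum>b\<in>B. \<Sum>c\<in>B. (b$j * c$k) *s Dc h (l b) (l c)) $ i" .
  qed
qed

lemma Dc_expand:
  fixes h :: "('a::field,'n::finite) cubic"
  assumes fin: "finite B" and d: "duals B l" and sp: "cols h \<subseteq> vec.span B"
  shows "Dc h v w = (\<Sum>a\<in>B. tri h (l a) v w *s a)"
proof -
  have "Dc h v w \<in> vec.span B"
    using Dc_in_span[of h v w] vec.span_mono[OF sp] by (auto simp: vec.span_span)
  from expand_span[OF this fin d] show ?thesis by (simp add: tri_def)
qed

lemma recon:
  fixes h :: "('a::field,'n::finite) cubic"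
  assumes sym: "is_cubic_form h" and fin: "finite B" and d: "duals B l"
    and sp: "cols h \<subseteq> vec.span B"
  shows "h i j k = (\<Sum>b\<in>B. \<Sum>c\<in>B. \<Sum>a\<in>B. tri h (l a) (l b) (l c) * a$i * b$j * c$k)"
proof -
  have "h i j k = col h j k $ i" by (simp add: col_def)
  also have "\<dots> = (\<Sum>b\<in>B. \<Sum>c\<in>B. (b$j * c$k) *s Dc h (l b) (l c)) $ i"
    by (rule arg_cong[where f="\<lambda>v. v $ i"], rule col_expand[OF assms])
  also have "\<dots> = (\<Sum>b\<in>B. \<Sum>c\<in>B. (b$j * c$k) * (\<Sum>a\<in>B. tri h (l a) (l b) (l c) *s a) $ i)"
    by (simp only: sum_component vector_smult_component Dc_expand[OF fin d sp])
  also have "\<dots> = (\<Sum>b\<in>B. \<Sum>c\<in>B. \<Sum>a\<in>B. tri h (l a) (l b) (l c) * a$i * b$j * c$k)"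
    by (simp only: sum_component vector_smult_component sum_distrib_left mult_ac)
  finally show ?thesis .
qed

lemma tri_expand: "tri h u v w = (\<Sum>i\<in>UNIV. \<Sum>j\<in>UNIV. \<Sum>k\<in>UNIV. u$i * v$j * w$k * h i j k)"
  by (simp only: tri_def dotp_def Dc_def vec_lambda_beta sum_distrib_left mult.assoc)

lemma tri_sym12:
  assumes "is_cubic_form h"
  shows "tri h u v w = tri h v u w"
proof -
  have "tri h v u w = (\<Sum>j\<in>UNIV. \<Sum>i\<in>UNIV. \<Sum>k\<in>UNIV. v$j * u$i * w$k * h j i k)"
    by (rule tri_expand)
  also have "\<dots> = (\<Sum>i\<in>UNIV. \<Sum>j\<in>UNIV. \<Sum>k\<in>UNIV. v$j * u$i * w$k * h j i k)"
    by (rule sum.swap)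
  also have "\<dots> = (\<Sum>i\<in>UNIV. \<Sum>j\<in>UNIV. \<Sum>k\<in>UNIV. u$i * v$j * w$k * h i j k)"
    using assms unfolding is_cubic_form_def
    by (intro sum.cong refl) (metis mult.commute)
  finally show ?thesis by (simp add: tri_expand)
qed

lemma tri_sym23:
  assumes "is_cubic_form h"
  shows "tri h u v w = tri h u w v"
proof -
  have "tri h u w v = (\<Sum>i\<in>UNIV. \<Sum>k\<in>UNIV. \<Sum>j\<in>UNIV. u$i * w$k * v$j * h i k j)"
    by (rule tri_expand)
  also have "\<dots> = (\<Sum>i\<in>UNIV. \<Sum>j\<in>UNIV. \<Sum>k\<in>UNIV. u$i * w$k * v$j * h i k j)"
    by (intro sum.cong refl sum.swap)
  also have "\<dots> = (\<Sum>i\<in>UNIV. \<Sum>j\<in>UNIV. \<Sum>k\<in>UNIV. u$i * v$j * w$k * h i j k)"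
    using assms unfolding is_cubic_form_def
    by (intro sum.cong refl) (metis mult.commute mult.assoc)
  finally show ?thesis by (simp add: tri_expand)
qed

lemma tri_add1: "tri h (u1 + u2) v w = tri h u1 v w + tri h u2 v w"
  by (simp add: tri_def dotp_add_left)
lemma tri_scale1: "tri h (c *s u) v w = c * tri h u v w"
  by (simp add: tri_def dotp_scale_left)

lemma Dc_lin: "Dc (\<lambda>i j k. a * f i j k + b * g i j k) v w = a *s Dc f v w + b *s Dc g v w"
  by (simp add: vec_eq_iff Dc_def algebra_simps sum.distrib sum_distrib_left)

lemma tri_lin: "tri (\<lambda>i j k. a * f i j k + b * g i j k) u v w = a * tri f u v w + b * tri g u v w"
  by (simp add: tri_def Dc_lin dotp_add_right dotp_scale_right)

lemma tri_orth:
  fixes h :: "('a::field,'n::finite) cubic"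
  assumes "cols h \<subseteq> vec.span S" "\<forall>s\<in>S. dotp u s = 0"
  shows "tri h u v w = 0"
proof -
  have "Dc h v w \<in> vec.span S"
    using Dc_in_span[of h v w] vec.span_mono[OF assms(1)] by (auto simp: vec.span_span)
  then show ?thesis unfolding tri_def by (rule orth_span) (use assms(2) in auto)
qed

lemma col_sym_mono: "col (sym_mono u v w) j k =
  (v$j * w$k + v$k * w$j) *s u + (u$j * w$k + u$k * w$j) *s v + (u$j * v$k + u$k * v$j) *s w"
  by (simp add: vec_eq_iff col_def sym_mono_def algebra_simps)

lemma sym3_cols:
  fixes f :: "('a::field,'n::finite) cubic"
  assumes "f \<in> Sym3_2 x y"
  shows "cols f \<subseteq> vec.span {x, y}"
proof
  fix c assume "c \<in> cols f"
  then obtain j k where c: "c = col f j k" by (auto simp: cols_def)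
  obtain a b cc d where f: "f = (\<lambda>i j k. a * sym_mono x x x i j k + b * sym_mono x x y i j k
    + cc * sym_mono x y y i j k + d * sym_mono y y y i j k)"
    using assms by (auto simp: Sym3_2_def)
  have e: "col f j k = a *s col (sym_mono x x x) j k + b *s col (sym_mono x x y) j k
     + cc *s col (sym_mono x y y) j k + d *s col (sym_mono y y y) j k"
    by (simp add: f vec_eq_iff col_def)
  have sx: "x \<in> vec.span {x,y}" and sy: "y \<in> vec.span {x,y}" by (auto intro: vec.span_base)
  have "\<And>u v w. u \<in> {x,y} \<Longrightarrow> v \<in> {x,y} \<Longrightarrow> w \<in> {x,y} \<Longrightarrow> col (sym_mono u v w) j k \<in> vec.span {x,y}"
    unfolding col_sym_mono by (intro vec.span_add vec.span_scale vec.span_base) auto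
  then show "c \<in> vec.span {x,y}"
    unfolding c e by (intro vec.span_add vec.span_scale) auto
qed

lemma indep2_lin:
  fixes x y :: "'a::field^'n"
  assumes ind: "vec.independent {x,y}" and xy: "x \<noteq> y"
  shows "lin_indep2 x y"
  unfolding lin_indep2_def
proof (intro allI impI)
  fix a b assume h: "\<forall>i. a * x$i + b * y$i = 0"
  define u where "u v = (if v = x then a else b)" for v
  have "(\<Sum>v\<in>{x,y}. u v *s v) = a *s x + b *s y" using xy by (simp add: u_def)
  also have "\<dots> = 0" using h by (simp add: vec_eq_iff)
  finally have z: "(\<Sum>v\<in>{x,y}. u v *s v) = 0" .
  have "\<not> ((\<exists>v\<in>{x,y}. u v \<noteq> 0) \<and> (\<Sum>v\<in>{x,y}. u v *s v) = 0)"
    using ind vec.dependent_finite[of "{x,y}"] by auto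
  then show "a = 0 \<and> b = 0" using z xy by (auto simp: u_def split: if_splits)
qed

lemma indep3_lin:
  fixes x y z :: "'a::field^'n"
  assumes ind: "vec.independent {x,y,z}" and d: "x \<noteq> y" "x \<noteq> z" "y \<noteq> z"
  shows "lin_indep3 x y z"
  unfolding lin_indep3_def
proof (intro allI impI)
  fix a b c assume h: "\<forall>i. a * x$i + b * y$i + c * z$i = 0"
  define u where "u v = (if v = x then a else if v = y then b else c)" for v
  have "(\<Sum>v\<in>{x,y,z}. u v *s v) = a *s x + b *s y + c *s z" using d by (simp add: u_def)
  also have "\<dots> = 0" using h by (simp add: vec_eq_iff)
  finally have zz: "(\<Sum>v\<in>{x,y,z}. u v *s v) = 0" .
  have "\<not> ((\<exists>v\<in>{x,y,z}. u v \<noteq> 0) \<and> (\<Sum>v\<in>{x,y,z}. u v *s v) = 0)"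
    using ind vec.dependent_finite[of "{x,y,z}"] by auto
  then show "a = 0 \<and> b = 0 \<and> c = 0" using zz d by (auto simp: u_def split: if_splits)
qed

lemma Sym3_2_lin:
  assumes "f \<in> Sym3_2 x y" "g \<in> Sym3_2 x y"
  shows "(\<lambda>i j k. a * f i j k + b * g i j k) \<in> Sym3_2 x y"
proof -
  obtain a1 b1 c1 d1 where f: "f = (\<lambda>i j k. a1 * sym_mono x x x i j k + b1 * sym_mono x x y i j k
    + c1 * sym_mono x y y i j k + d1 * sym_mono y y y i j k)"
    using assms by (auto simp: Sym3_2_def)
  obtain a2 b2 c2 d2 where g: "g = (\<lambda>i j k. a2 * sym_mono x x x i j k + b2 * sym_mono x x y i j k
    + c2 * sym_mono x y y i j k + d2 * sym_mono y y y i j k)"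
    using assms by (auto simp: Sym3_2_def)
  show ?thesis unfolding Sym3_2_def
    by (rule CollectI, rule exI[of _ "a*a1+b*a2"], rule exI[of _ "a*b1+b*b2"],
        rule exI[of _ "a*c1+b*c2"], rule exI[of _ "a*d1+b*d2"])
       (simp add: f g algebra_simps)
qed

lemma in_Sym3_2:
  fixes h :: "('a::field_char_0,'n::finite) cubic"
  assumes sym: "is_cubic_form h" and ind: "vec.independent {x,y}" and xy: "x \<noteq> y"
    and sp: "cols h \<subseteq> vec.span {x,y}"
  shows "h \<in> Sym3_2 x y"
proof -
  obtain l where d: "duals {x,y} l" using dual_exists[OF ind] by (auto simp: duals_def)
  have fin: "finite {x,y}" by simp
  note R = recon[OF sym fin d sp]
  let ?t = "\<lambda>a b c. tri h (l a) (l b) (l c)"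
  have s1: "?t y x x = ?t x x y" "?t x y x = ?t x x y"
    using tri_sym12[OF sym] tri_sym23[OF sym] by metis+
  have s2: "?t y x y = ?t x y y" "?t y y x = ?t x y y"
    using tri_sym12[OF sym] tri_sym23[OF sym] by metis+
  show ?thesis unfolding Sym3_2_def
  proof (rule CollectI, rule exI[of _ "?t x x x / 6"], rule exI[of _ "?t x x y / 2"],
        rule exI[of _ "?t x y y / 2"], rule exI[of _ "?t y y y / 6"], intro ext)
    fix i j k
    show "h i j k = ?t x x x / 6 * sym_mono x x x i j k + ?t x x y / 2 * sym_mono x x y i j k +
          ?t x y y / 2 * sym_mono x y y i j k + ?t y y y / 6 * sym_mono y y y i j k"
    proof -
      have c6: "\<And>t A::'a. t / 6 * (6 * A) = t * A" and c2: "\<And>t A::'a. t / 2 * (2 * A) = t * A"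
        by simp_all
      have e0: "h i j k = ?t x x x * (x$i * x$j * x$k) + ?t x x y * (x$i * x$j * y$k + x$i * y$j * x$k + y$i * x$j * x$k)
         + ?t x y y * (x$i * y$j * y$k + y$i * x$j * y$k + y$i * y$j * x$k) + ?t y y y * (y$i * y$j * y$k)"
        apply (subst R)
        using xy by (simp add: s1 s2 algebra_simps)
      have e1: "sym_mono x x x i j k = 6 * (x$i * x$j * x$k)"
        by (simp add: sym_mono_def algebra_simps)
      have e2: "sym_mono x x y i j k = 2 * (x$i * x$j * y$k + x$i * y$j * x$k + y$i * x$j * x$k)"
        by (simp add: sym_mono_def algebra_simps)
      have e3: "sym_mono x y y i j k = 2 * (x$i * y$j * y$k + y$i * x$j * y$k + y$i * y$j * x$k)"
        by (simp add: sym_mono_def algebra_simps)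
      have e4: "sym_mono y y y i j k = 6 * (y$i * y$j * y$k)"
        by (simp add: sym_mono_def algebra_simps)
      show ?thesis unfolding e0 e1 e2 e3 e4 c6 c2 ..
    qed
  qed
qed

lemma caseA:
  fixes f g :: "('a::field_char_0,'n::finite) cubic"
  assumes sf: "is_cubic_form f" and sg: "is_cubic_form g"
    and dimE: "vec.dim (vec.span (cols f \<union> cols g)) \<le> 2"
    and n: "CARD('n) \<ge> 2"
  shows "\<exists>x y. lin_indep2 x y \<and> f \<in> Sym3_2 x y \<and> g \<in> Sym3_2 x y"
proof -
  let ?E = "vec.span (cols f \<union> cols g)"
  obtain B0 where B0: "B0 \<subseteq> ?E" "vec.independent B0" "?E \<subseteq> vec.span B0" "card B0 = vec.dim ?E"
    using vec.basis_exists by blast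
  obtain C where C: "B0 \<subseteq> C" "vec.independent C" "UNIV \<subseteq> vec.span C"
    using vec.maximal_independent_subset_extend[of B0 UNIV] B0(2) by auto
  have finC: "finite C" using C(2) vec.finiteI_independent by blast
  have "card C = CARD('n)"
    using vec.dim_eq_card_independent[OF C(2)] C(3) vec_dim_card
    by (metis top.extremum_uniqueI vec.dim_span)
  then have cC: "card C \<ge> 2" using n by simp
  have finB0: "finite B0" using finC C(1) finite_subset by blast
  have "card (C - B0) \<ge> 2 - card B0"
    using cC card_Diff_subset[OF finB0 C(1)] by simp
  then obtain D where D: "D \<subseteq> C - B0" "card D = 2 - card B0" and finD: "finite D"
    by (rule obtain_subset_with_card_n)
  let ?B = "B0 \<union> D"
  have cB: "card ?B = 2"
    using card_Un_disjoint[OF finB0 finD] D B0(4) dimE by auto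
  have "?B \<subseteq> C" using C(1) D(1) by auto
  then have indB: "vec.independent ?B"
    by (rule vec.independent_mono[OF C(2)])
  obtain x y where xy: "?B = {x,y}" "x \<noteq> y" using card_2_iff[THEN iffD1, OF cB] by blast
  have spE: "?E \<subseteq> vec.span {x,y}"
    using B0(3) vec.span_mono[of B0 ?B] xy(1) by auto
  have cf: "cols f \<subseteq> vec.span {x,y}" and cg: "cols g \<subseteq> vec.span {x,y}"
    using spE vec.span_superset[of "cols f \<union> cols g"] by auto
  show ?thesis
    using in_Sym3_2[OF sf _ xy(2) cf] in_Sym3_2[OF sg _ xy(2) cg] indep2_lin[OF _ xy(2)] indB xy(1)
    by auto
qed

lemma cross_exists:
  fixes P1 P2 P3 Q1 Q2 Q3 :: "'a::field"
  shows "\<exists>m1 m2 m3. (m1 \<noteq> 0 \<or> m2 \<noteq> 0 \<or> m3 \<noteq> 0) \<and>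
     m1 * P1 + m2 * P2 + m3 * P3 = 0 \<and> m1 * Q1 + m2 * Q2 + m3 * Q3 = 0"
proof -
  let ?c1 = "P2 * Q3 - P3 * Q2" and ?c2 = "P3 * Q1 - P1 * Q3" and ?c3 = "P1 * Q2 - P2 * Q1"
  show ?thesis
  proof (cases "?c1 \<noteq> 0 \<or> ?c2 \<noteq> 0 \<or> ?c3 \<noteq> 0")
    case True
    then show ?thesis
      by (intro exI[of _ ?c1] exI[of _ ?c2] exI[of _ ?c3]) (simp add: algebra_simps)
  next
    case False
    then have c: "?c1 = 0" "?c2 = 0" "?c3 = 0" by auto
    show ?thesis
    proof (cases "P1 \<noteq> 0 \<or> P2 \<noteq> 0 \<or> P3 \<noteq> 0")
      case True
      then consider "P3 \<noteq> 0 \<or> P2 \<noteq> 0" | "P1 \<noteq> 0" by blast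
      then show ?thesis
      proof cases
        case 1
        then show ?thesis using c
          by (intro exI[of _ 0] exI[of _ P3] exI[of _ "-P2"]) (auto simp: algebra_simps)
      next
        case 2
        then show ?thesis using c
          by (intro exI[of _ "-P3"] exI[of _ 0] exI[of _ P1]) (auto simp: algebra_simps)
      qed
    next
      case False
      then have p: "P1 = 0" "P2 = 0" "P3 = 0" by auto
      show ?thesis
      proof (cases "Q3 \<noteq> 0 \<or> Q2 \<noteq> 0")
        case True
        then show ?thesis using p
          by (intro exI[of _ 0] exI[of _ Q3] exI[of _ "-Q2"]) (auto simp: algebra_simps)
      next
        case False
        then show ?thesis using p
          by (intro exI[of _ 0] exI[of _ 1] exI[of _ 0]) auto
      qed
    qed
  qed
qed

lemma alg_step:
  fixes a0 a1 a2 a3 b0 b1 b2 b3 t m1 m2 m3 :: "'a::field"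
  assumes ndf: "\<forall>n1 n2. n1*a0 + n2*a1 = 0 \<and> n1*a1 + n2*a2 = 0 \<and> n1*a2 + n2*a3 = 0 \<longrightarrow> n1 = 0 \<and> n2 = 0"
    and ndg: "\<forall>n1 n3. n1*b0 + n3*b1 = 0 \<and> n1*b1 + n3*b2 = 0 \<and> n1*b2 + n3*b3 = 0 \<longrightarrow> n1 = 0 \<and> n3 = 0"
    and t: "t \<noteq> 0"
    and nz: "m1 \<noteq> 0 \<or> m2 \<noteq> 0 \<or> m3 \<noteq> 0"
    and e11: "m1*(a0 + t*b0) + m2*a1 + m3*(t*b1) = 0"
    and e12: "m1*a1 + m2*a2 = 0" and e22: "m1*a2 + m2*a3 = 0"
    and e13: "t*(m1*b1 + m3*b2) = 0" and e33: "t*(m1*b2 + m3*b3) = 0"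
  shows "m1*a0 + m2*a1 \<noteq> 0 \<and> m1*b0 + m3*b1 \<noteq> 0 \<and> m1*a0 + m2*a1 = - t * (m1*b0 + m3*b1)
     \<and> m1*b1 + m3*b2 = 0 \<and> m1*b2 + m3*b3 = 0"
proof -
  have f13: "m1*b1 + m3*b2 = 0" and f33: "m1*b2 + m3*b3 = 0" using e13 e33 t by auto
  have rel0: "(m1*a0 + m2*a1) + t * (m1*b0 + m3*b1) = 0" using e11 by (simp add: algebra_simps)
  then have rel: "m1*a0 + m2*a1 = - t * (m1*b0 + m3*b1)"
    by (simp add: eq_neg_iff_add_eq_0)
  have c: "m1*a0 + m2*a1 \<noteq> 0"
  proof
    assume c0: "m1*a0 + m2*a1 = 0"
    then have "m1 = 0 \<and> m2 = 0" using ndf e12 e22 by blast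
    moreover have "m1*b0 + m3*b1 = 0" using rel c0 t by simp
    ultimately have "m1 = 0 \<and> m3 = 0" using ndg f13 f33 by blast
    then show False using nz \<open>m1 = 0 \<and> m2 = 0\<close> by simp
  qed
  have d: "m1*b0 + m3*b1 \<noteq> 0" using c rel by auto
  show ?thesis using c d rel f13 f33 by blast
qed

lemma pencil_alg:
  fixes a0 a1 a2 a3 b0 b1 b2 b3 :: "'a::field_char_0"
  assumes ndf: "\<forall>n1 n2. n1*a0 + n2*a1 = 0 \<and> n1*a1 + n2*a2 = 0 \<and> n1*a2 + n2*a3 = 0 \<longrightarrow> n1 = 0 \<and> n2 = 0"
    and ndg: "\<forall>n1 n3. n1*b0 + n3*b1 = 0 \<and> n1*b1 + n3*b2 = 0 \<and> n1*b2 + n3*b3 = 0 \<longrightarrow> n1 = 0 \<and> n3 = 0"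
    and sol: "\<And>t. t \<in> {1,2} \<Longrightarrow> \<exists>m1 m2 m3. (m1 \<noteq> 0 \<or> m2 \<noteq> 0 \<or> m3 \<noteq> 0) \<and>
        m1*(a0 + t*b0) + m2*a1 + m3*(t*b1) = 0 \<and> m1*a1 + m2*a2 = 0 \<and> m1*a2 + m2*a3 = 0 \<and>
        t*(m1*b1 + m3*b2) = 0 \<and> t*(m1*b2 + m3*b3) = 0"
  shows "a2 = 0 \<and> a3 = 0 \<and> b2 = 0 \<and> b3 = 0 \<and> a1 \<noteq> 0 \<and> b1 \<noteq> 0"
proof -
  obtain m1 m2 m3 where M: "m1 \<noteq> 0 \<or> m2 \<noteq> 0 \<or> m3 \<noteq> 0"
     "m1*(a0 + 1*b0) + m2*a1 + m3*(1*b1) = 0" "m1*a1 + m2*a2 = 0" "m1*a2 + m2*a3 = 0"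
     "1*(m1*b1 + m3*b2) = 0" "1*(m1*b2 + m3*b3) = 0"
    using sol[of 1] by blast
  obtain k1 k2 k3 where K: "k1 \<noteq> 0 \<or> k2 \<noteq> 0 \<or> k3 \<noteq> 0"
     "k1*(a0 + 2*b0) + k2*a1 + k3*(2*b1) = 0" "k1*a1 + k2*a2 = 0" "k1*a2 + k2*a3 = 0"
     "2*(k1*b1 + k3*b2) = 0" "2*(k1*b2 + k3*b3) = 0"
    using sol[of 2] by blast
  note S1 = alg_step[OF ndf ndg _ M] and S2 = alg_step[OF ndf ndg _ K]
  define c where "c = m1*a0 + m2*a1"
  define d where "d = m1*b0 + m3*b1"
  define c' where "c' = k1*a0 + k2*a1"
  define d' where "d' = k1*b0 + k3*b1"
  have s1': "c \<noteq> 0 \<and> d \<noteq> 0 \<and> c = - 1 * d \<and> m1*b1 + m3*b2 = 0 \<and> m1*b2 + m3*b3 = 0"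
    unfolding c_def d_def by (rule S1) simp
  then have s1: "c \<noteq> 0" "d \<noteq> 0" "c = - d" "m1*b1 + m3*b2 = 0" "m1*b2 + m3*b3 = 0" by auto
  have s2': "c' \<noteq> 0 \<and> d' \<noteq> 0 \<and> c' = - 2 * d' \<and> k1*b1 + k3*b2 = 0 \<and> k1*b2 + k3*b3 = 0"
    unfolding c'_def d'_def by (rule S2) simp
  then have s2: "c' \<noteq> 0" "d' \<noteq> 0" "c' = - 2 * d'" "k1*b1 + k3*b2 = 0" "k1*b2 + k3*b3 = 0" by auto
  have "c' * m1 - c * k1 = 0 \<and> c' * m2 - c * k2 = 0"
  proof -
    have "(c' * m1 - c * k1)*a0 + (c' * m2 - c * k2)*a1 = c' * (m1*a0 + m2*a1) - c * (k1*a0 + k2*a1)"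
      by (simp add: algebra_simps)
    also have "\<dots> = 0" unfolding c_def[symmetric] c'_def[symmetric] by simp
    finally have 1: "(c' * m1 - c * k1)*a0 + (c' * m2 - c * k2)*a1 = 0" .
    have "(c' * m1 - c * k1)*a1 + (c' * m2 - c * k2)*a2 = c' * (m1*a1 + m2*a2) - c * (k1*a1 + k2*a2)"
      by (simp add: algebra_simps)
    also have "\<dots> = 0" using M(3) K(3) by simp
    finally have 2: "(c' * m1 - c * k1)*a1 + (c' * m2 - c * k2)*a2 = 0" .
    have "(c' * m1 - c * k1)*a2 + (c' * m2 - c * k2)*a3 = c' * (m1*a2 + m2*a3) - c * (k1*a2 + k2*a3)"
      by (simp add: algebra_simps)
    also have "\<dots> = 0" using M(4) K(4) by simp
    finally have 3: "(c' * m1 - c * k1)*a2 + (c' * m2 - c * k2)*a3 = 0" .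
    show ?thesis using ndf 1 2 3 by blast
  qed
  then have r1: "c' * m1 = c * k1" by simp
  have "d' * m1 - d * k1 = 0 \<and> d' * m3 - d * k3 = 0"
  proof -
    have "(d' * m1 - d * k1)*b0 + (d' * m3 - d * k3)*b1 = d' * (m1*b0 + m3*b1) - d * (k1*b0 + k3*b1)"
      by (simp add: algebra_simps)
    also have "\<dots> = 0" unfolding d_def[symmetric] d'_def[symmetric] by simp
    finally have 1: "(d' * m1 - d * k1)*b0 + (d' * m3 - d * k3)*b1 = 0" .
    have "(d' * m1 - d * k1)*b1 + (d' * m3 - d * k3)*b2 = d' * (m1*b1 + m3*b2) - d * (k1*b1 + k3*b2)"
      by (simp add: algebra_simps)
    also have "\<dots> = 0" using s1(4) s2(4) by simp
    finally have 2: "(d' * m1 - d * k1)*b1 + (d' * m3 - d * k3)*b2 = 0" .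
    have "(d' * m1 - d * k1)*b2 + (d' * m3 - d * k3)*b3 = d' * (m1*b2 + m3*b3) - d * (k1*b2 + k3*b3)"
      by (simp add: algebra_simps)
    also have "\<dots> = 0" using s1(5) s2(5) by simp
    finally have 3: "(d' * m1 - d * k1)*b2 + (d' * m3 - d * k3)*b3 = 0" .
    show ?thesis using ndg 1 2 3 by blast
  qed
  then have r2: "d' * m1 = d * k1" by simp
  have "d' * m1 = 0"
  proof -
    have "-2 * d' * m1 = - d * k1" using r1 s1(3) s2(3) by simp
    also have "\<dots> = - (d' * m1)" using r2 by simp
    finally have "-2 * d' * m1 = - (d' * m1)" .
    then have "(2 - 1) * (d' * m1) = 0" by (simp add: algebra_simps)
    then show ?thesis by simp
  qed
  then have m1: "m1 = 0" using s2(2) by simp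
  have "m2 * a1 \<noteq> 0" using s1(1) m1 unfolding c_def by simp
  then have "m2 \<noteq> 0" "a1 \<noteq> 0" by auto
  moreover have "a2 = 0" "a3 = 0" using M(3,4) m1 \<open>m2 \<noteq> 0\<close> by auto
  moreover have "m3 * b1 \<noteq> 0" using s1(2) m1 unfolding d_def by simp
  then have "m3 \<noteq> 0" "b1 \<noteq> 0" by auto
  moreover have "b2 = 0" "b3 = 0" using s1(4,5) m1 \<open>m3 \<noteq> 0\<close> by auto
  ultimately show ?thesis by simp
qed

lemma half_B1:
  fixes f g :: "('a::field,'n::finite) cubic"
  assumes sf: "is_cubic_form f" and sg: "is_cubic_form g"
    and fU: "finite BU" and fV: "finite BV" and disj: "BU \<inter> BV = {}"
    and d: "duals (BU \<union> BV) l"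
    and cf: "cols f \<subseteq> vec.span BU" and cg: "cols g \<subseteq> vec.span BV"
  shows "cols f \<subseteq> vec.span (cols (\<lambda>i j k. 1 * f i j k + 1 * g i j k))"
proof -
  let ?B = "BU \<union> BV"
  let ?h = "\<lambda>i j k. 1 * f i j k + 1 * g i j k"
  have fin: "finite ?B" using fU fV by simp
  have cfB: "cols f \<subseteq> vec.span ?B" using cf vec.span_mono[of BU ?B] by auto
  have cgB: "cols g \<subseteq> vec.span ?B" using cg vec.span_mono[of BV ?B] by auto
  have oU: "\<forall>s\<in>BU. dotp (l b) s = 0" if "b \<in> BV" for b
    using d disj that unfolding duals_def by auto
  have oV: "\<forall>s\<in>BV. dotp (l b) s = 0" if "b \<in> BU" for b
    using d disj that unfolding duals_def by auto
  have Df0: "Dc f (l b) (l c) = 0" if "b \<in> BV \<or> c \<in> BV" for b c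
  proof -
    have "tri f (l a) (l b) (l c) = 0" for a
    proof (cases "b \<in> BV")
      case True
      have "tri f (l a) (l b) (l c) = tri f (l b) (l a) (l c)" by (rule tri_sym12[OF sf])
      also have "\<dots> = 0" by (rule tri_orth[OF cf oU[OF True]])
      finally show ?thesis .
    next
      case False
      then have cV: "c \<in> BV" using that by auto
      have "tri f (l a) (l b) (l c) = tri f (l a) (l c) (l b)" by (rule tri_sym23[OF sf])
      also have "\<dots> = tri f (l c) (l a) (l b)" by (rule tri_sym12[OF sf])
      also have "\<dots> = 0" by (rule tri_orth[OF cf oU[OF cV]])
      finally show ?thesis .
    qed
    then show ?thesis using Dc_expand[OF fin d cfB, of "l b" "l c"] by simp
  qed
  have Dg0: "Dc g (l b) (l c) = 0" if "b \<in> BU" for b c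
  proof -
    have "tri g (l a) (l b) (l c) = 0" for a
    proof -
      have "tri g (l a) (l b) (l c) = tri g (l b) (l a) (l c)" by (rule tri_sym12[OF sg])
      also have "\<dots> = 0" by (rule tri_orth[OF cg oV[OF that]])
      finally show ?thesis .
    qed
    then show ?thesis using Dc_expand[OF fin d cgB, of "l b" "l c"] by simp
  qed
  have Din: "Dc f (l b) (l c) \<in> vec.span (cols ?h)" if "b \<in> ?B" "c \<in> ?B" for b c
  proof (cases "b \<in> BU \<and> c \<in> BU")
    case True
    have "Dc ?h (l b) (l c) = Dc f (l b) (l c)"
      using Dc_lin[of 1 f 1 g "l b" "l c"] Dg0[of b c] True by simp
    then show ?thesis using Dc_in_span[of ?h "l b" "l c"] by simp
  next
    case False
    then have "b \<in> BV \<or> c \<in> BV" using that by auto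
    then show ?thesis using Df0 vec.span_zero by simp
  qed
  show ?thesis
  proof
    fix v assume "v \<in> cols f"
    then obtain j k where v: "v = col f j k" by (auto simp: cols_def)
    show "v \<in> vec.span (cols ?h)"
      unfolding v col_expand[OF sf fin d cfB]
      by (intro vec.span_sum vec.span_scale Din)
  qed
qed

lemma caseB1:
  fixes f g :: "('a::field,'n::finite) cubic"
  assumes sf: "is_cubic_form f" and sg: "is_cubic_form g"
    and int0: "vec.span (cols f) \<inter> vec.span (cols g) = {0}"
    and bin: "cols (\<lambda>i j k. 1 * f i j k + 1 * g i j k) \<subseteq> vec.span {p,q}"
  shows "vec.dim (vec.span (cols f \<union> cols g)) \<le> 2"
proof -
  let ?U = "vec.span (cols f)" and ?V = "vec.span (cols g)" and ?E = "vec.span (cols f \<union> cols g)"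
  obtain BU where BU: "BU \<subseteq> ?U" "vec.independent BU" "?U \<subseteq> vec.span BU" "card BU = vec.dim ?U"
    using vec.basis_exists by blast
  obtain BV where BV: "BV \<subseteq> ?V" "vec.independent BV" "?V \<subseteq> vec.span BV" "card BV = vec.dim ?V"
    using vec.basis_exists by blast
  have fU: "finite BU" using BU(2) vec.finiteI_independent by blast
  have fV: "finite BV" using BV(2) vec.finiteI_independent by blast
  have "vec.dim {x + y |x y. x \<in> ?U \<and> y \<in> ?V} + vec.dim (?U \<inter> ?V) = vec.dim ?U + vec.dim ?V"
    by (rule vec.dim_sums_Int) auto
  then have dE: "vec.dim ?E = vec.dim ?U + vec.dim ?V"
    using int0 by (simp add: vec.span_Un)
  have z: "0 \<notin> BU" using BU(2) vec.dependent_zero[of BU] by auto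
  have disj: "BU \<inter> BV = {}"
  proof (rule ccontr)
    assume "BU \<inter> BV \<noteq> {}"
    then obtain v where v: "v \<in> BU" "v \<in> BV" by auto
    then have "v \<in> ?U \<inter> ?V" using BU(1) BV(1) by auto
    then have "v = 0" using int0 by auto
    then show False using z v by simp
  qed
  let ?B = "BU \<union> BV"
  have finB: "finite ?B" using fU fV by simp
  have cB: "card ?B = vec.dim ?E" using card_Un_disjoint[OF fU fV disj] BU(4) BV(4) dE by simp
  have UE: "?U \<subseteq> ?E" by (rule vec.span_mono) auto
  have VE: "?V \<subseteq> ?E" by (rule vec.span_mono) auto
  have BE: "?B \<subseteq> ?E" using BU(1) BV(1) UE VE by blast
  have "cols f \<union> cols g \<subseteq> vec.span ?B"
    using BU(3) BV(3) vec.span_mono[of BU ?B] vec.span_mono[of BV ?B] vec.span_superset[of "cols f"]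
      vec.span_superset[of "cols g"] by blast
  then have EB: "?E \<subseteq> vec.span ?B"
    by (rule vec.span_minimal[OF _ vec.subspace_span])
  have indB: "vec.independent ?B"
    by (rule vec.card_le_dim_spanning[OF BE EB finB]) (simp add: cB)
  obtain l where d: "duals ?B l" using dual_exists[OF indB] by (auto simp: duals_def)
  have cf: "cols f \<subseteq> vec.span BU" using BU(3) vec.span_superset[of "cols f"] by blast
  have cg: "cols g \<subseteq> vec.span BV" using BV(3) vec.span_superset[of "cols g"] by blast
  have disj': "BV \<inter> BU = {}" using disj by (simp add: Int_commute)
  have d': "duals (BV \<union> BU) l" using d by (simp add: Un_commute)
  have h1: "cols f \<subseteq> vec.span (cols (\<lambda>i j k. 1 * f i j k + 1 * g i j k))"
    by (rule half_B1[OF sf sg fU fV disj d cf cg])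
  have h2: "cols g \<subseteq> vec.span (cols (\<lambda>i j k. 1 * g i j k + 1 * f i j k))"
    by (rule half_B1[OF sg sf fV fU disj' d' cg cf])
  have eqh: "(\<lambda>i j k. 1 * g i j k + 1 * f i j k) = (\<lambda>i j k. 1 * f i j k + 1 * g i j k)"
    by (intro ext) (rule add.commute)
  have "vec.span (cols (\<lambda>i j k. 1 * f i j k + 1 * g i j k)) \<subseteq> vec.span {p,q}"
    using vec.span_mono[OF bin] by (simp add: vec.span_span)
  then have "cols f \<union> cols g \<subseteq> vec.span {p,q}" using h1 h2 eqh by auto
  then have "?E \<subseteq> vec.span {p,q}" by (rule vec.span_minimal[OF _ vec.subspace_span])
  then have "vec.dim ?E \<le> card {p,q}" by (rule vec.dim_le_card) simp
  also have "\<dots> \<le> 2" by (simp add: card_insert_le_m1)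
  finally show ?thesis .
qed

lemma nondeg_gen:
  fixes h :: "('a::field,'n::finite) cubic"
  assumes sym: "is_cubic_form h" and fin: "finite B" and d: "duals B l"
    and sp: "cols h \<subseteq> vec.span B"
    and z: "\<forall>b\<in>B. \<forall>c\<in>B. tri h u (l b) (l c) = 0"
  shows "\<forall>s\<in>cols h. dotp u s = 0"
proof
  fix s assume "s \<in> cols h"
  then obtain j k where s: "s = col h j k" by (auto simp: cols_def)
  have "dotp u s = (\<Sum>b\<in>B. \<Sum>c\<in>B. (b$j * c$k) * tri h u (l b) (l c))"
    unfolding s col_expand[OF sym fin d sp]
    by (simp add: dotp_sum_right dotp_scale_right tri_def)
  also have "\<dots> = 0" using z by simp
  finally show "dotp u s = 0" .
qed

lemma sym_mono_xxw: "sym_mono x x w i j k = 2 * (x$i * x$j * w$k + x$i * w$j * x$k + w$i * x$j * x$k)"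
  by (simp add: sym_mono_def algebra_simps)

lemma caseB2:
  fixes f g :: "('a::field_char_0,'n::finite) cubic"
  assumes sf: "is_cubic_form f" and sg: "is_cubic_form g"
    and ind: "vec.independent {x,y,z}" and dxy: "x \<noteq> y" "x \<noteq> z" "y \<noteq> z"
    and cf: "cols f \<subseteq> vec.span {x,y}" and cg: "cols g \<subseteq> vec.span {x,z}"
    and xf: "x \<in> vec.span (cols f)" and yf: "y \<in> vec.span (cols f)"
    and xg: "x \<in> vec.span (cols g)" and zg: "z \<in> vec.span (cols g)"
    and bin: "\<And>t. t \<in> {1,2} \<Longrightarrow> \<exists>p q. cols (\<lambda>i j k. 1 * f i j k + t * g i j k) \<subseteq> vec.span {p,q}"
  shows "\<exists>y' z'. lin_indep3 x y' z' \<and>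
     {(\<lambda>i j k. a * f i j k + b * g i j k) | a b. True} =
     {(\<lambda>i j k. a * sym_mono x x y' i j k + b * sym_mono x x z' i j k) | a b. True}"
proof -
  let ?B = "{x,y,z}"
  have fin: "finite ?B" by simp
  obtain l where d: "duals ?B l" using dual_exists[OF ind] by (auto simp: duals_def)
  have dd: "dotp (l x) x = 1" "dotp (l x) y = 0" "dotp (l x) z = 0"
           "dotp (l y) x = 0" "dotp (l y) y = 1" "dotp (l y) z = 0"
           "dotp (l z) x = 0" "dotp (l z) y = 0" "dotp (l z) z = 1"
    using d dxy unfolding duals_def by auto
  have cfB: "cols f \<subseteq> vec.span ?B" using cf vec.span_mono[of "{x,y}" ?B] by auto
  have cgB: "cols g \<subseteq> vec.span ?B" using cg vec.span_mono[of "{x,z}" ?B] by auto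
  have fz1: "tri f (l z) u v = 0" for u v by (rule tri_orth[OF cf]) (simp add: dd)
  have fz2: "tri f u (l z) v = 0" for u v using fz1 tri_sym12[OF sf] by metis
  have fz3: "tri f u v (l z) = 0" for u v using fz2 tri_sym23[OF sf] by metis
  have gy1: "tri g (l y) u v = 0" for u v by (rule tri_orth[OF cg]) (simp add: dd)
  have gy2: "tri g u (l y) v = 0" for u v using gy1 tri_sym12[OF sg] by metis
  have gy3: "tri g u v (l y) = 0" for u v using gy2 tri_sym23[OF sg] by metis
  define a0 where "a0 = tri f (l x) (l x) (l x)"
  define a1 where "a1 = tri f (l x) (l x) (l y)"
  define a2 where "a2 = tri f (l x) (l y) (l y)"
  define a3 where "a3 = tri f (l y) (l y) (l y)"
  define b0 where "b0 = tri g (l x) (l x) (l x)"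
  define b1 where "b1 = tri g (l x) (l x) (l z)"
  define b2 where "b2 = tri g (l x) (l z) (l z)"
  define b3 where "b3 = tri g (l z) (l z) (l z)"
  have VF: "tri f (l x) (l x) (l x) = a0" "tri f (l x) (l x) (l y) = a1" "tri f (l x) (l y) (l x) = a1"
     "tri f (l y) (l x) (l x) = a1" "tri f (l x) (l y) (l y) = a2" "tri f (l y) (l x) (l y) = a2"
     "tri f (l y) (l y) (l x) = a2" "tri f (l y) (l y) (l y) = a3"
    unfolding a0_def a1_def a2_def a3_def using tri_sym12[OF sf] tri_sym23[OF sf] by metis+
  have VG: "tri g (l x) (l x) (l x) = b0" "tri g (l x) (l x) (l z) = b1" "tri g (l x) (l z) (l x) = b1"
     "tri g (l z) (l x) (l x) = b1" "tri g (l x) (l z) (l z) = b2" "tri g (l z) (l x) (l z) = b2"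
     "tri g (l z) (l z) (l x) = b2" "tri g (l z) (l z) (l z) = b3"
    unfolding b0_def b1_def b2_def b3_def using tri_sym12[OF sg] tri_sym23[OF sg] by metis+
  note V = VF VG fz1 fz2 fz3 gy1 gy2 gy3
  have ndf: "\<forall>n1 n2. n1*a0 + n2*a1 = 0 \<and> n1*a1 + n2*a2 = 0 \<and> n1*a2 + n2*a3 = 0 \<longrightarrow> n1 = 0 \<and> n2 = 0"
  proof (intro allI impI)
    fix n1 n2 assume e: "n1*a0 + n2*a1 = 0 \<and> n1*a1 + n2*a2 = 0 \<and> n1*a2 + n2*a3 = 0"
    let ?u = "n1 *s l x + n2 *s l y"
    have "\<forall>b\<in>?B. \<forall>c\<in>?B. tri f ?u (l b) (l c) = 0"
      using e by (auto simp: tri_add1 tri_scale1 V)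
    then have o: "\<forall>s\<in>cols f. dotp ?u s = 0" by (rule nondeg_gen[OF sf fin d cfB])
    have "dotp ?u x = 0" by (rule orth_span[OF xf o])
    moreover have "dotp ?u y = 0" by (rule orth_span[OF yf o])
    ultimately show "n1 = 0 \<and> n2 = 0" by (simp add: dotp_add_left dotp_scale_left dd)
  qed
  have ndg: "\<forall>n1 n3. n1*b0 + n3*b1 = 0 \<and> n1*b1 + n3*b2 = 0 \<and> n1*b2 + n3*b3 = 0 \<longrightarrow> n1 = 0 \<and> n3 = 0"
  proof (intro allI impI)
    fix n1 n3 assume e: "n1*b0 + n3*b1 = 0 \<and> n1*b1 + n3*b2 = 0 \<and> n1*b2 + n3*b3 = 0"
    let ?u = "n1 *s l x + n3 *s l z"
    have "\<forall>b\<in>?B. \<forall>c\<in>?B. tri g ?u (l b) (l c) = 0"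
      using e by (auto simp: tri_add1 tri_scale1 V)
    then have o: "\<forall>s\<in>cols g. dotp ?u s = 0" by (rule nondeg_gen[OF sg fin d cgB])
    have "dotp ?u x = 0" by (rule orth_span[OF xg o])
    moreover have "dotp ?u z = 0" by (rule orth_span[OF zg o])
    ultimately show "n1 = 0 \<and> n3 = 0" by (simp add: dotp_add_left dotp_scale_left dd)
  qed
  have sol: "\<exists>m1 m2 m3. (m1 \<noteq> 0 \<or> m2 \<noteq> 0 \<or> m3 \<noteq> 0) \<and>
        m1*(a0 + t*b0) + m2*a1 + m3*(t*b1) = 0 \<and> m1*a1 + m2*a2 = 0 \<and> m1*a2 + m2*a3 = 0 \<and>
        t*(m1*b1 + m3*b2) = 0 \<and> t*(m1*b2 + m3*b3) = 0" if t: "t \<in> {1,2}" for t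
  proof -
    let ?h = "\<lambda>i j k. 1 * f i j k + t * g i j k"
    obtain p q where pq: "cols ?h \<subseteq> vec.span {p,q}" using bin[OF t] by blast
    obtain m1 m2 m3 where m: "m1 \<noteq> 0 \<or> m2 \<noteq> 0 \<or> m3 \<noteq> 0"
      "m1 * dotp (l x) p + m2 * dotp (l y) p + m3 * dotp (l z) p = 0"
      "m1 * dotp (l x) q + m2 * dotp (l y) q + m3 * dotp (l z) q = 0"
      using cross_exists by blast
    let ?u = "m1 *s l x + m2 *s l y + m3 *s l z"
    have "\<forall>s\<in>{p,q}. dotp ?u s = 0" using m(2,3) by (auto simp: dotp_add_left dotp_scale_left)
    then have T0: "tri ?h ?u v w = 0" for v w by (rule tri_orth[OF pq])
    have T: "tri ?h ?u v w = 1 * (m1 * tri f (l x) v w + m2 * tri f (l y) v w + m3 * tri f (l z) v w)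
        + t * (m1 * tri g (l x) v w + m2 * tri g (l y) v w + m3 * tri g (l z) v w)" for v w
      by (simp only: tri_lin tri_add1 tri_scale1)
    have E1: "m1*(a0 + t*b0) + m2*a1 + m3*(t*b1) = 0"
      using T0[of "l x" "l x"] unfolding T by (simp add: V algebra_simps)
    have E2: "m1*a1 + m2*a2 = 0"
      using T0[of "l x" "l y"] unfolding T by (simp add: V algebra_simps)
    have E3: "m1*a2 + m2*a3 = 0"
      using T0[of "l y" "l y"] unfolding T by (simp add: V algebra_simps)
    have E4: "t*(m1*b1 + m3*b2) = 0"
      using T0[of "l x" "l z"] unfolding T by (simp add: V algebra_simps)
    have E5: "t*(m1*b2 + m3*b3) = 0"
      using T0[of "l z" "l z"] unfolding T by (simp add: V algebra_simps)
    show ?thesis using m(1) E1 E2 E3 E4 E5 by blast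
  qed
  have A: "a2 = 0 \<and> a3 = 0 \<and> b2 = 0 \<and> b3 = 0 \<and> a1 \<noteq> 0 \<and> b1 \<noteq> 0"
    by (rule pencil_alg[OF ndf ndg sol])
  then have A0: "a2 = 0" "a3 = 0" "b2 = 0" "b3 = 0" and a1: "a1 \<noteq> 0" and b1: "b1 \<noteq> 0" by auto
  define c where "c = a0 / (3 * a1)"
  define c' where "c' = b0 / (3 * b1)"
  define y' where "y' = y + c *s x"
  define z' where "z' = z + c' *s x"
  have kc: "a1 * (3 * c) = a0" using a1 unfolding c_def by simp
  have kc': "b1 * (3 * c') = b0" using b1 unfolding c'_def by simp
  have c2: "\<And>t A::'a. t / 2 * (2 * A) = t * A" by simp
  have ef: "f = (\<lambda>i j k. (a1 / 2) * sym_mono x x y' i j k)"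
  proof (intro ext)
    fix i j k
    have "f i j k = a0 * (x$i * x$j * x$k) + a1 * (x$i * x$j * y$k + x$i * y$j * x$k + y$i * x$j * x$k)"
      apply (subst recon[OF sf fin d cfB])
      using dxy by (simp add: V A0 algebra_simps)
    also have "\<dots> = a1 * (x$i * x$j * y$k + x$i * y$j * x$k + y$i * x$j * x$k) + (a1 * (3 * c)) * (x$i * x$j * x$k)"
      by (simp add: kc)
    also have "\<dots> = a1 * (x$i * x$j * y'$k + x$i * y'$j * x$k + y'$i * x$j * x$k)"
      by (simp add: y'_def algebra_simps)
    also have "\<dots> = (a1 / 2) * sym_mono x x y' i j k"
      by (simp only: sym_mono_xxw c2)
    finally show "f i j k = (a1 / 2) * sym_mono x x y' i j k" .
  qed
  have eg: "g = (\<lambda>i j k. (b1 / 2) * sym_mono x x z' i j k)"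
  proof (intro ext)
    fix i j k
    have "g i j k = b0 * (x$i * x$j * x$k) + b1 * (x$i * x$j * z$k + x$i * z$j * x$k + z$i * x$j * x$k)"
      apply (subst recon[OF sg fin d cgB])
      using dxy by (simp add: V A0 algebra_simps)
    also have "\<dots> = b1 * (x$i * x$j * z$k + x$i * z$j * x$k + z$i * x$j * x$k) + (b1 * (3 * c')) * (x$i * x$j * x$k)"
      by (simp add: kc')
    also have "\<dots> = b1 * (x$i * x$j * z'$k + x$i * z'$j * x$k + z'$i * x$j * x$k)"
      by (simp add: z'_def algebra_simps)
    also have "\<dots> = (b1 / 2) * sym_mono x x z' i j k"
      by (simp only: sym_mono_xxw c2)
    finally show "g i j k = (b1 / 2) * sym_mono x x z' i j k" .
  qed
  have li: "lin_indep3 x y' z'"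
    unfolding lin_indep3_def
  proof (intro allI impI)
    fix \<alpha> \<beta> \<gamma> assume h: "\<forall>i. \<alpha> * x$i + \<beta> * y'$i + \<gamma> * z'$i = 0"
    have "\<forall>i. (\<alpha> + \<beta> * c + \<gamma> * c') * x$i + \<beta> * y$i + \<gamma> * z$i = 0"
    proof
      fix i
      have "(\<alpha> + \<beta> * c + \<gamma> * c') * x$i + \<beta> * y$i + \<gamma> * z$i = \<alpha> * x$i + \<beta> * y'$i + \<gamma> * z'$i"
        by (simp add: y'_def z'_def algebra_simps)
      then show "(\<alpha> + \<beta> * c + \<gamma> * c') * x$i + \<beta> * y$i + \<gamma> * z$i = 0" using h by simp
    qed
    then have "\<alpha> + \<beta> * c + \<gamma> * c' = 0 \<and> \<beta> = 0 \<and> \<gamma> = 0"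
      using indep3_lin[OF ind dxy] unfolding lin_indep3_def by blast
    then show "\<alpha> = 0 \<and> \<beta> = 0 \<and> \<gamma> = 0" by (elim conjE) simp
  qed
  have seteq: "{(\<lambda>i j k. a * f i j k + b * g i j k) | a b. True} =
     {(\<lambda>i j k. a * sym_mono x x y' i j k + b * sym_mono x x z' i j k) | a b. True}"
  proof (intro set_eqI iffI)
    fix h assume "h \<in> {(\<lambda>i j k. a * f i j k + b * g i j k) | a b. True}"
    then obtain a b where h: "h = (\<lambda>i j k. a * f i j k + b * g i j k)" by blast
    have "h = (\<lambda>i j k. (a * (a1/2)) * sym_mono x x y' i j k + (b * (b1/2)) * sym_mono x x z' i j k)"
      unfolding h ef eg by (simp add: mult.assoc)
    then show "h \<in> {(\<lambda>i j k. a * sym_mono x x y' i j k + b * sym_mono x x z' i j k) | a b. True}" by blast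
  next
    fix h assume "h \<in> {(\<lambda>i j k. a * sym_mono x x y' i j k + b * sym_mono x x z' i j k) | a b. True}"
    then obtain a b where h: "h = (\<lambda>i j k. a * sym_mono x x y' i j k + b * sym_mono x x z' i j k)" by blast
    have "h = (\<lambda>i j k. (2 * a / a1) * f i j k + (2 * b / b1) * g i j k)"
      unfolding h ef eg using a1 b1 by (simp add: field_simps)
    then show "h \<in> {(\<lambda>i j k. a * f i j k + b * g i j k) | a b. True}" by blast
  qed
  show ?thesis using li seteq by blast
qed

lemma dimE_le:
  fixes f g :: "('a::field,'n::finite) cubic"
  assumes "cols f \<subseteq> S" "cols g \<subseteq> S" "vec.subspace S"
  shows "vec.dim (vec.span (cols f \<union> cols g)) \<le> vec.dim S"
proof -
  have "vec.span (cols f \<union> cols g) \<subseteq> S" using assms by (intro vec.span_minimal) auto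
  then show ?thesis by (rule vec.dim_subset)
qed

theorem lemma2p4:
  fixes W :: "('a::field_char_0, 'n::finite) cubic set"
  assumes "algebraically_closed TYPE('a)"
    and "CARD('n) \<ge> 3"
    and "pencil W"
    and "\<forall>f\<in>W. \<exists>x y. f \<in> Sym3_2 x y"
  shows "(\<exists>x y. lin_indep2 x y \<and> W \<subseteq> Sym3_2 x y) \<or>
         (\<exists>x y z. lin_indep3 x y z \<and>
            W = {(\<lambda>i j k. a * sym_mono x x y i j k + b * sym_mono x x z i j k) | a b. True})"
proof -
  obtain f g where sf: "is_cubic_form f" and sg: "is_cubic_form g"
    and W: "W = {(\<lambda>i j k. a * f i j k + b * g i j k) | a b. True}"
    using assms(3) unfolding pencil_def by blast
  have memW: "(\<lambda>i j k. a * f i j k + b * g i j k) \<in> W" for a b using W by blast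
  have binW: "\<exists>p q. cols (\<lambda>i j k. a * f i j k + b * g i j k) \<subseteq> vec.span {p,q}" for a b
    using assms(4) memW[of a b] sym3_cols by blast
  have f10: "(\<lambda>i j k. 1 * f i j k + 0 * g i j k) = f" by simp
  have g01: "(\<lambda>i j k. 0 * f i j k + 1 * g i j k) = g" by simp
  let ?U = "vec.span (cols f)" and ?V = "vec.span (cols g)" and ?E = "vec.span (cols f \<union> cols g)"
  have dim2: "vec.dim (vec.span (cols h)) \<le> 2" if ex: "\<exists>p q. cols h \<subseteq> vec.span {p,q}" for h :: "('a,'n) cubic"
  proof -
    obtain p q where pq: "cols h \<subseteq> vec.span {p,q}" using ex by blast
    have "vec.span (cols h) \<subseteq> vec.span {p,q}" by (rule vec.span_minimal[OF pq vec.subspace_span])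
    then have "vec.dim (vec.span (cols h)) \<le> card {p,q}" by (rule vec.dim_le_card) simp
    also have "\<dots> \<le> 2" by (simp add: card_insert_le_m1)
    finally show ?thesis .
  qed
  have dU: "vec.dim ?U \<le> 2" using dim2[of f] binW[of 1 0] by (simp only: f10)
  have dV: "vec.dim ?V \<le> 2" using dim2[of g] binW[of 0 1] by (simp only: g01)
  show ?thesis
  proof (cases "vec.dim ?E \<le> 2")
    case True
    obtain x y where xy: "lin_indep2 x y" "f \<in> Sym3_2 x y" "g \<in> Sym3_2 x y"
      using caseA[OF sf sg True] assms(2) by auto
    have "W \<subseteq> Sym3_2 x y" unfolding W using Sym3_2_lin[OF xy(2,3)] by blast
    then show ?thesis using xy(1) by blast
  next
    case False
    then have nE: "\<not> vec.dim ?E \<le> 2" .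
    have ne0: "?U \<inter> ?V \<noteq> {0}"
    proof
      assume i0: "?U \<inter> ?V = {0}"
      obtain p q where pq: "cols (\<lambda>i j k. 1 * f i j k + 1 * g i j k) \<subseteq> vec.span {p,q}"
        using binW by blast
      show False using caseB1[OF sf sg i0 pq] nE by simp
    qed
    obtain x where x: "x \<in> ?U" "x \<in> ?V" "x \<noteq> 0"
    proof -
      have "0 \<in> ?U \<inter> ?V" by (simp add: vec.span_zero)
      then obtain v where "v \<in> ?U \<inter> ?V" "v \<noteq> 0" using ne0 by blast
      then show ?thesis using that by blast
    qed
    have cfU: "cols f \<subseteq> ?U" and cgV: "cols g \<subseteq> ?V" by (rule vec.span_superset)+
    have sxV: "vec.span {x} \<subseteq> ?V" using x(2) by (intro vec.span_minimal) auto
    have sxU: "vec.span {x} \<subseteq> ?U" using x(1) by (intro vec.span_minimal) auto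
    have "\<not> ?U \<subseteq> vec.span {x}"
    proof
      assume "?U \<subseteq> vec.span {x}"
      then have "cols f \<subseteq> ?V" using cfU sxV by blast
      then have "vec.dim ?E \<le> vec.dim ?V" by (rule dimE_le[OF _ cgV vec.subspace_span])
      then show False using nE dV by simp
    qed
    then obtain y where y: "y \<in> ?U" "y \<notin> vec.span {x}" by blast
    have "\<not> ?V \<subseteq> vec.span {x}"
    proof
      assume "?V \<subseteq> vec.span {x}"
      then have "cols g \<subseteq> ?U" using cgV sxU by blast
      then have "vec.dim ?E \<le> vec.dim ?U" by (rule dimE_le[OF cfU _ vec.subspace_span])
      then show False using nE dU by simp
    qed
    then obtain z where z: "z \<in> ?V" "z \<notin> vec.span {x}" by blast
    have xsp: "x \<in> vec.span {x}" by (simp add: vec.span_base)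
    have xy: "x \<noteq> y" using y(2) xsp by auto
    have xz: "x \<noteq> z" using z(2) xsp by auto
    have ix: "vec.independent {x}" using x(3) by simp
    have ixy: "vec.independent {x,y}"
      using vec.independent_insertI[OF y(2) ix] by (simp add: insert_commute)
    have ixz: "vec.independent {x,z}"
      using vec.independent_insertI[OF z(2) ix] by (simp add: insert_commute)
    have Uxy: "?U \<subseteq> vec.span {x,y}"
      by (rule vec.card_ge_dim_independent[OF _ ixy]) (use x(1) y(1) dU xy in auto)
    have Vxz: "?V \<subseteq> vec.span {x,z}"
      by (rule vec.card_ge_dim_independent[OF _ ixz]) (use x(2) z(1) dV xz in auto)
    have zn: "z \<notin> vec.span {x,y}"
    proof
      assume zs: "z \<in> vec.span {x,y}"
      have "vec.span {x,y} \<subseteq> ?U" using x(1) y(1) by (intro vec.span_minimal) auto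
      moreover have "vec.span {x,z} \<subseteq> vec.span {x,y}"
        using zs by (intro vec.span_minimal) (auto simp: vec.span_base)
      ultimately have "cols g \<subseteq> ?U" using cgV Vxz by blast
      then have "vec.dim ?E \<le> vec.dim ?U" by (rule dimE_le[OF cfU _ vec.subspace_span])
      then show False using nE dU by simp
    qed
    have yz: "y \<noteq> z" using zn by (auto simp: vec.span_base)
    have ind3: "vec.independent {x,y,z}"
      using vec.independent_insertI[OF zn ixy] by (simp add: insert_commute)
    have bin: "\<exists>p q. cols (\<lambda>i j k. 1 * f i j k + t * g i j k) \<subseteq> vec.span {p,q}" if "t \<in> {1,2}" for t
      using binW by blast
    obtain y' z' where yz': "lin_indep3 x y' z'"
      "{(\<lambda>i j k. a * f i j k + b * g i j k) | a b. True} =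
       {(\<lambda>i j k. a * sym_mono x x y' i j k + b * sym_mono x x z' i j k) | a b. True}"
      using caseB2[OF sf sg ind3 xy xz yz _ _ x(1) _ x(2) z(1) bin] cfU cgV Uxy Vxz y(1)
      by blast
    then show ?thesis unfolding W by blast
  qed
qed

end
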